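(* Let $A\in\mathbb{R}^{n\times n}$ and $H\in\mathbb{R}^{n\times n}$ be symmetric positive definite, let $Z\in\mathbb{R}^{n\times r}$ with $r<n$ have full column rank, let $P=I-AZ(Z^TAZ)^{-1}Z^T$, let $\bm b\in\mathbb{R}^n$ with $P\bm b\neq \bm 0$, and let $\bm x = A^{-1}\bm b$. For arbitrary vectors $\tilde{\bm x}_j\in\mathbb{R}^n$ define $$\bm{x}_j = P^T\tilde{\bm{x}}_j + Z(Z^TAZ)^{-1}Z^T\bm{b},\qquad \bm r_j = \bm b - A\bm x_j.$$ Then $$\frac{\|\bm{x}-\bm{x}_j\|_{PA}}{\|\bm{x}\|_{PA}} \le \sqrt{\kappa_{\mathrm{eff}}(H^{-1}PA)}\,\frac{\|\bm{r}_j\|_{H^{-1}}}{\|P\bm{b}\|_{H^{-1}}}.$$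
   Context: $PA$ is symmetric positive semidefinite with kernel equal to the range of $Z$ (dimension $r$). For a symmetric positive semidefinite matrix $B$, $\|\bm v\|_B=\sqrt{\bm v^TB\bm v}$. The matrix $H^{-1}PA$ is similar to the symmetric positive semidefinite matrix $L^{-1}PAL^{-T}$, where $H=LL^T$ is the Cholesky factorization, so its eigenvalues are real and nonnegative; ordering them $\lambda_1\le\dots\le\lambda_n$, exactly $r$ are zero, and $\kappa_{\mathrm{eff}}(H^{-1}PA)=\lambda_n(H^{-1}PA)/\lambda_{r+1}(H^{-1}PA)$. *)

theory Defs
  imports "HOL-Analysis.Analysis" "HOL-Computational_Algebra.Polynomial"
begin

definition spd :: "real^'n^'n \<Rightarrow> bool" where
  "spd M \<longleftrightarrow> transpose M = M \<and> (\<forall>v. v \<noteq> 0 \<longrightarrow> v \<bullet> (M *v v) > 0)"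

definition bnorm :: "real^'n^'n \<Rightarrow> real^'n \<Rightarrow> real" where
  "bnorm B v = sqrt (v \<bullet> (B *v v))"

definition charpoly :: "real^'n^'n \<Rightarrow> real poly" where
  "charpoly M = det (\<chi> i j. (if i = j then [:0, 1:] else 0) - [:M $ i $ j:])"

text \<open>Eigenvalues (with multiplicity) in increasing order
  lambda_1 \<le> ... \<le> lambda_n, for a matrix whose eigenvalues are all real.\<close>
definition sorted_eigs :: "real^'n^'n \<Rightarrow> real list" where
  "sorted_eigs M = (THE ls. sorted ls \<and> length ls = CARD('n) \<and>
      charpoly M = (\<Prod>l\<leftarrow>ls. [:- l, 1:]))"

text \<open>Effective condition number lambda_n / lambda_{r+1} (0-based index r).\<close>
definition kappa_eff :: "nat \<Rightarrow> real^'n^'n \<Rightarrow> real" where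
  "kappa_eff r M = last (sorted_eigs M) / (sorted_eigs M ! r)"

end

theory Submission
  imports Defs "HOL-Library.Multiset"
begin

lemma sym_dot:
  fixes H :: "real^'n^'n"
  assumes "transpose H = H"
  shows "x \<bullet> (H *v y) = (H *v x) \<bullet> y"
  by (metis assms dot_lmul_matrix vector_transpose_matrix)

lemma quad_expand:
  fixes B :: "real^'n^'n"
  assumes "transpose B = B"
  shows "(x + t *\<^sub>R y) \<bullet> (B *v (x + t *\<^sub>R y))
       = x \<bullet> (B *v x) + 2 * t * (y \<bullet> (B *v x)) + t^2 * (y \<bullet> (B *v y))"
proof -
  have s: "x \<bullet> (B *v y) = y \<bullet> (B *v x)"
    using sym_dot[OF assms, of x y] by (simp add: inner_commute)
  show ?thesis
    by (simp add: matrix_vector_right_distrib matrix_vector_mult_scaleR inner_add_left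
        inner_add_right s power2_eq_square algebra_simps)
qed

lemma quad_scale:
  fixes B :: "real^'n^'n"
  shows "(c *\<^sub>R x) \<bullet> (B *v (c *\<^sub>R x)) = c^2 * (x \<bullet> (B *v x))"
  by (simp add: matrix_vector_mult_scaleR power2_eq_square)

lemma lin_zero:
  fixes a c :: real
  assumes "c \<le> 0" and "\<And>t. 2 * t * a + t^2 * c \<le> 0"
  shows "a = 0"
proof (rule ccontr)
  assume "a \<noteq> 0"
  define d where "d = 1 - c"
  have d: "d \<ge> 1" using assms(1) by (simp add: d_def)
  have "2 * (a/d) * a + (a/d)^2 * c \<le> 0" by (rule assms(2))
  hence "2 * a * a * d + a * a * c \<le> 0"
    using d by (simp add: field_simps power2_eq_square)
  moreover have "2 * a * a * d + a * a * c = a * a * (1 + d)"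
    by (simp add: d_def algebra_simps)
  moreover have "a * a > 0" using \<open>a \<noteq> 0\<close> by (simp add: zero_less_mult_iff linorder_neq_iff disj_commute)
  moreover have "a * a * (1 + d) > 0" using d \<open>a * a > 0\<close> by (simp add: zero_less_mult_iff)
  ultimately show False by linarith
qed

lemma spd_pos: "spd H \<Longrightarrow> v \<noteq> 0 \<Longrightarrow> v \<bullet> (H *v v) > 0"
  unfolding spd_def by blast

lemma spd_sym: "spd H \<Longrightarrow> transpose H = H"
  unfolding spd_def by blast

lemma eig_step:
  fixes H M :: "real^'n^'n" and u :: "'n \<Rightarrow> real^'n"
  assumes H: "spd H" and M: "transpose M = M" and cI: "card I < CARD('n)"
    and orth: "\<forall>i\<in>I. \<forall>j\<in>I. u i \<bullet> (H *v u j) = (if i = j then 1 else 0)"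
    and eig: "\<forall>i\<in>I. M *v u i = \<mu> i *\<^sub>R (H *v u i)"
  shows "\<exists>w m. (\<forall>i\<in>I. u i \<bullet> (H *v w) = 0) \<and> w \<bullet> (H *v w) = 1 \<and> M *v w = m *\<^sub>R (H *v w)"
proof -
  have Hs: "transpose H = H" using H by (rule spd_sym)
  have fI: "finite I" by simp
  define V where "V = {v. \<forall>i\<in>I. u i \<bullet> (H *v v) = 0}"
  have V_eq: "V = (\<Inter>i\<in>I. {v. (H *v u i) \<bullet> v = 0})"
    unfolding V_def using sym_dot[OF Hs] by auto
  have V_lin: "v + t *\<^sub>R w \<in> V" if "v \<in> V" "w \<in> V" for v w t
    using that unfolding V_def
    by (simp add: matrix_vector_right_distrib matrix_vector_mult_scaleR inner_add_right)
  have V_scale: "t *\<^sub>R w \<in> V" if "w \<in> V" for w t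
    using V_lin[OF _ that, of 0 t] by (simp add: V_def)
  define B where "B = (\<lambda>i. H *v u i) ` I"
  have "dim B \<le> card B" by (simp add: B_def dim_le_card')
  also have "card B \<le> card I" unfolding B_def by (rule card_image_le[OF fI])
  finally have dB: "dim B < DIM(real^'n)" using cI by simp
  then obtain z where z0: "z \<noteq> 0" and zo: "\<And>y. y \<in> span B \<Longrightarrow> orthogonal z y"
    using orthogonal_to_subspace_exists[OF dB] by blast
  have zV: "z \<in> V"
    unfolding V_eq
  proof
    fix i assume "i \<in> I"
    hence "H *v u i \<in> span B" unfolding B_def by (intro span_base) auto
    from zo[OF this] show "z \<in> {v. (H *v u i) \<bullet> v = 0}" unfolding orthogonal_def by (simp add: inner_commute)
  qed
  define S where "S = V \<inter> sphere 0 1"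
  have "closed V" unfolding V_eq by (intro closed_INT ballI closed_hyperplane)
  hence cS: "compact S" unfolding S_def by (intro closed_Int_compact compact_sphere)
  have zS: "(1 / norm z) *\<^sub>R z \<in> S" unfolding S_def using z0 V_scale[OF zV] by simp
  hence neS: "S \<noteq> {}" by auto
  define f where "f = (\<lambda>v. (v \<bullet> (M *v v)) / (v \<bullet> (H *v v)))"
  have S0: "v \<noteq> 0" if "v \<in> S" for v using that unfolding S_def by auto
  have contf: "continuous_on S f"
    unfolding f_def
    apply (intro continuous_intros matrix_vector_mult_linear_continuous_on[THEN continuous_on_subset])
    using S0 spd_pos[OF H] by (auto simp: less_le)
  obtain w0 where w0S: "w0 \<in> S" and w0max: "\<And>y. y \<in> S \<Longrightarrow> f y \<le> f w0"
    using continuous_attains_sup[OF cS neS contf] by blast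
  define m where "m = f w0"
  have w0V: "w0 \<in> V" and w00: "w0 \<noteq> 0" using w0S S0 unfolding S_def by auto
  have hw0: "w0 \<bullet> (H *v w0) > 0" using spd_pos[OF H w00] .
  have mw0: "w0 \<bullet> (M *v w0) = m * (w0 \<bullet> (H *v w0))"
    unfolding m_def f_def using hw0 by simp
  have bound: "v \<bullet> (M *v v) \<le> m * (v \<bullet> (H *v v))" if "v \<in> V" for v
  proof (cases "v = 0")
    case True thus ?thesis by simp
  next
    case False
    define v' where "v' = (1 / norm v) *\<^sub>R v"
    have "v' \<in> S" unfolding S_def v'_def using False V_scale[OF that] by simp
    hence "f v' \<le> m" using w0max unfolding m_def by blast
    moreover have "f v' = f v" unfolding f_def v'_def quad_scale using False by simp
    moreover have "v \<bullet> (H *v v) > 0" using spd_pos[OF H False] .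
    ultimately show ?thesis unfolding f_def by (simp add: divide_le_eq mult.commute)
  qed
  define g where "g = M *v w0 - m *\<^sub>R (H *v w0)"
  have gV: "v \<bullet> g = 0" if "v \<in> V" for v
  proof -
    define c where "c = v \<bullet> (M *v v) - m * (v \<bullet> (H *v v))"
    have c0: "c \<le> 0" using bound[OF that] by (simp add: c_def)
    have "2 * t * (v \<bullet> g) + t^2 * c \<le> 0" for t
    proof -
      have "w0 + t *\<^sub>R v \<in> V" by (rule V_lin[OF w0V that])
      from bound[OF this] 
      have "w0 \<bullet> (M *v w0) + 2 * t * (v \<bullet> (M *v w0)) + t^2 * (v \<bullet> (M *v v))
         \<le> m * (w0 \<bullet> (H *v w0) + 2 * t * (v \<bullet> (H *v w0)) + t^2 * (v \<bullet> (H *v v)))"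
        unfolding quad_expand[OF M] quad_expand[OF Hs] .
      thus ?thesis unfolding g_def c_def mw0
        by (simp add: inner_diff_right algebra_simps)
    qed
    thus ?thesis using lin_zero[OF c0] by blast
  qed
  have gu: "g \<bullet> u i = 0" if "i \<in> I" for i
  proof -
    have a: "(M *v w0) \<bullet> u i = \<mu> i * (w0 \<bullet> (H *v u i))"
      using sym_dot[OF M, of w0 "u i"] eig that by simp
    have b: "w0 \<bullet> (H *v u i) = 0"
      using sym_dot[OF Hs, of w0 "u i"] w0V that unfolding V_def by (simp add: inner_commute)
    have c: "(H *v w0) \<bullet> u i = 0" using b sym_dot[OF Hs, of w0 "u i"] by simp
    show ?thesis unfolding g_def using a b c by (simp add: inner_diff_left)
  qed
  define y where "y = g - (\<Sum>i\<in>I. (u i \<bullet> (H *v g)) *\<^sub>R u i)"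
  have yV: "y \<in> V"
    unfolding V_def mem_Collect_eq
  proof
    fix j assume j: "j \<in> I"
    have e1: "u j \<bullet> (H *v y) = u j \<bullet> (H *v g) - (\<Sum>i\<in>I. (u i \<bullet> (H *v g)) * (u j \<bullet> (H *v u i)))"
      unfolding y_def by (simp add: matrix_vector_mult_diff_distrib inner_diff_right
          vec.sum inner_sum_right matrix_vector_mult_scaleR)
    have "(\<Sum>i\<in>I. (u i \<bullet> (H *v g)) * (u j \<bullet> (H *v u i)))
        = (\<Sum>i\<in>I. if i = j then u i \<bullet> (H *v g) else 0)"
      by (rule sum.cong) (use orth j in auto)
    also have "\<dots> = u j \<bullet> (H *v g)" using j by simp
    finally show "u j \<bullet> (H *v y) = 0" using e1 by simp
  qed
  have "g \<bullet> y = g \<bullet> g"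
    unfolding y_def using gu by (simp add: inner_diff_right inner_sum_right)
  hence "g \<bullet> g = 0" using gV[OF yV] by (simp add: inner_commute)
  hence g0: "g = 0" by simp
  define w where "w = (1 / sqrt (w0 \<bullet> (H *v w0))) *\<^sub>R w0"
  have "\<forall>i\<in>I. u i \<bullet> (H *v w) = 0" using V_scale[OF w0V] unfolding V_def w_def by blast
  moreover have "w \<bullet> (H *v w) = 1"
    unfolding w_def quad_scale using hw0 by (simp add: power_divide)
  moreover have "M *v w = m *\<^sub>R (H *v w)"
    using g0 unfolding w_def g_def by (simp add: matrix_vector_mult_scaleR)
  ultimately show ?thesis by blast
qed

lemma eig_all:
  fixes H M :: "real^'n^'n"
  assumes H: "spd H" and M: "transpose M = M"
  shows "\<exists>(u::'n \<Rightarrow> real^'n) \<mu>. (\<forall>i j. u i \<bullet> (H *v u j) = (if i = j then 1 else 0)) \<and>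
               (\<forall>i. M *v u i = \<mu> i *\<^sub>R (H *v u i))"
proof -
  have Hs: "transpose H = H" using H by (rule spd_sym)
  have "\<exists>u \<mu>. (\<forall>i\<in>I. \<forall>j\<in>I. u i \<bullet> (H *v u j) = (if i = j then 1 else 0)) \<and>
               (\<forall>i\<in>I. M *v u i = \<mu> i *\<^sub>R (H *v u i))" for I :: "'n set"
    using finite[of I]
  proof (induction rule: finite_induct)
    case empty
    show ?case by auto
  next
    case (insert a I)
    then obtain u \<mu> where orth: "\<forall>i\<in>I. \<forall>j\<in>I. u i \<bullet> (H *v u j) = (if i = j then 1 else 0)"
      and eig: "\<forall>i\<in>I. M *v u i = \<mu> i *\<^sub>R (H *v u i)" by blast
    have "card I < card (insert a I)" using insert by simp
    also have "\<dots> \<le> CARD('n)" by (rule card_mono) auto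
    finally have cI: "card I < CARD('n)" .
    obtain w m where wo: "\<forall>i\<in>I. u i \<bullet> (H *v w) = 0" and ww: "w \<bullet> (H *v w) = 1"
      and we: "M *v w = m *\<^sub>R (H *v w)"
      using eig_step[OF H M cI orth eig] by blast
    have wo2: "\<forall>i\<in>I. w \<bullet> (H *v u i) = 0"
      using wo sym_dot[OF Hs] by (metis inner_commute)
    show ?case
      apply (rule exI[of _ "u(a := w)"], rule exI[of _ "\<mu>(a := m)"])
      using orth eig wo wo2 ww we insert.hyps(2) by auto
  qed
  from this[of UNIV] show ?thesis by blast
qed

definition diagm :: "('n \<Rightarrow> real) \<Rightarrow> real^'n^'n" where
  "diagm \<mu> = (\<chi> i j. if i = j then \<mu> i else 0)"

definition colm :: "('n \<Rightarrow> real^'m) \<Rightarrow> real^'n^'m" where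
  "colm u = (\<chi> i j. u j $ i)"

lemma colm_mult: "B ** colm u = colm (\<lambda>j. B *v u j)"
  by (simp add: colm_def matrix_matrix_mult_def matrix_vector_mult_def vec_eq_iff)

lemma colm_T: "transpose (colm u) ** colm w = (\<chi> i j. u i \<bullet> w j)"
  by (simp add: colm_def matrix_matrix_mult_def transpose_def inner_vec_def vec_eq_iff)

lemma colm_diag: "colm w ** diagm \<mu> = colm (\<lambda>j. \<mu> j *\<^sub>R w j)"
  by (simp add: colm_def diagm_def matrix_matrix_mult_def vec_eq_iff if_distrib mult.commute
      cong: if_cong)

lemma spectral:
  fixes H M :: "real^'n^'n"
  assumes H: "spd H" and M: "transpose M = M"
  shows "\<exists>(U::real^'n^'n) \<mu>. transpose U ** H ** U = mat 1 \<and> M ** U = H ** U ** diagm \<mu>"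
proof -
  obtain u :: "'n \<Rightarrow> real^'n" and \<mu> where o: "\<forall>i j. u i \<bullet> (H *v u j) = (if i = j then 1 else 0)"
    and e: "\<forall>i. M *v u i = \<mu> i *\<^sub>R (H *v u i)"
    using eig_all[OF H M] by blast
  have "transpose (colm u) ** H ** colm u = transpose (colm u) ** (H ** colm u)"
    by (simp add: matrix_mul_assoc)
  also have "\<dots> = transpose (colm u) ** colm (\<lambda>j. H *v u j)" by (simp only: colm_mult)
  also have "\<dots> = mat 1" unfolding colm_T using o by (simp add: mat_def)
  finally have "transpose (colm u) ** H ** colm u = mat 1" .
  moreover have "M ** colm u = H ** colm u ** diagm \<mu>"
    by (simp add: colm_mult colm_diag e matrix_vector_mult_scaleR)
  ultimately show ?thesis by blast
qed

lemma mm_diff_left: "(A::real^'n^'m) ** (B - C) = A ** B - A ** C"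
  by (simp add: matrix_matrix_mult_def vec_eq_iff sum_subtractf algebra_simps)

lemma mm_diff_right: "((B::real^'n^'m) - C) ** A = B ** A - C ** A"
  by (simp add: matrix_matrix_mult_def vec_eq_iff sum_subtractf algebra_simps)

lemma mat_mm_left: "mat t ** (A::real^'n^'m) = t *\<^sub>R A"
proof -
  have "(\<Sum>k\<in>UNIV. (if i = k then t else 0) * A $ k $ j) = t * A $ i $ j" for i j
    by (simp add: if_distrib[where f="\<lambda>x. x * _"] cong: if_cong)
  thus ?thesis by (simp add: matrix_matrix_mult_def vec_eq_iff mat_def)
qed

lemma mat_mm_right: "(A::real^'n^'m) ** mat t = t *\<^sub>R A"
  by (simp add: matrix_matrix_mult_def vec_eq_iff mat_def if_distrib mult.commute cong: if_cong)

lemma transpose_diff: "transpose ((A::real^'n^'m) - B) = transpose A - transpose B"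
  by (simp add: transpose_def vec_eq_iff)

lemma inj_invertible: "inj ((*v) (A::real^'n^'n)) \<Longrightarrow> invertible A"
  using matrix_left_invertible_injective invertible_left_inverse by blast

lemma inv_props:
  assumes "invertible (A::real^'n^'n)"
  shows "A ** matrix_inv A = mat 1" "matrix_inv A ** A = mat 1"
proof -
  have "\<exists>A'. A ** A' = mat 1 \<and> A' ** A = mat 1" using assms unfolding invertible_def by blast
  from someI_ex[OF this] show "A ** matrix_inv A = mat 1" "matrix_inv A ** A = mat 1"
    unfolding matrix_inv_def by auto
qed

lemma poly_charpoly: "poly (charpoly X) t = det (mat t - X)"
proof -
  have e: "poly (if i = j then [:0, 1:] else 0) t = (if i = j then t else 0)" for i j :: 'n
    by simp
  show ?thesis unfolding charpoly_def det_def
    by (simp only: poly_sum poly_prod poly_mult poly_diff e poly_of_int vec_lambda_beta mat_def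
        vector_minus_component) simp
qed

lemma det_sim:
  fixes H M U Hi :: "real^'n^'n"
  assumes THU: "transpose U ** H ** U = mat 1" and MU: "M ** U = H ** U ** diagm \<mu>"
    and HHi: "H ** Hi = mat 1"
  shows "det (mat t - Hi ** M) = (\<Prod>i\<in>UNIV. t - \<mu> i)"
proof -
  let ?T = "transpose U"
  have f1: "?T ** H ** mat t ** U = mat t"
  proof -
    have "?T ** H ** mat t ** U = t *\<^sub>R (?T ** H ** U)"
      by (simp add: mat_mm_right scalar_matrix_assoc)
    also have "\<dots> = mat t" using THU by (simp add: vec_eq_iff mat_def)
    finally show ?thesis .
  qed
  have f2: "?T ** H ** (Hi ** M) ** U = diagm \<mu>"
  proof -
    have "?T ** H ** (Hi ** M) ** U = ?T ** ((H ** Hi) ** (M ** U))"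
      by (simp add: matrix_mul_assoc)
    also have "\<dots> = (?T ** H ** U) ** diagm \<mu>" using HHi MU by (simp add: matrix_mul_assoc)
    also have "\<dots> = diagm \<mu>" using THU by simp
    finally show ?thesis .
  qed
  have a: "?T ** H ** (mat t - Hi ** M) ** U = mat t - diagm \<mu>"
    by (simp only: mm_diff_left mm_diff_right f1 f2)
  have b: "det (?T ** H) * det U = 1" using THU det_mul[of "?T ** H" U] by simp
  have "det (mat t - Hi ** M) = det (?T ** H) * det (mat t - Hi ** M) * det U"
    using b by (simp add: algebra_simps)
  also have "\<dots> = det (?T ** H ** (mat t - Hi ** M) ** U)" by (simp only: det_mul)
  also have "\<dots> = det (mat t - diagm \<mu>)" by (simp only: a)
  also have "\<dots> = (\<Prod>i\<in>UNIV. t - \<mu> i)"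
    by (subst det_diagonal) (auto simp: mat_def diagm_def)
  finally show ?thesis .
qed

lemma charpoly_sim:
  fixes H M U Hi :: "real^'n^'n"
  assumes "transpose U ** H ** U = mat 1" and "M ** U = H ** U ** diagm \<mu>"
    and "H ** Hi = mat 1"
  shows "charpoly (Hi ** M) = (\<Prod>i\<in>UNIV. [:- \<mu> i, 1:])"
proof -
  have "poly (charpoly (Hi ** M)) = poly (\<Prod>i\<in>UNIV. [:- \<mu> i, 1:])"
  proof
    fix t show "poly (charpoly (Hi ** M)) t = poly (\<Prod>i\<in>UNIV. [:- \<mu> i, 1:]) t"
      unfolding poly_charpoly det_sim[OF assms] by (simp add: poly_prod)
  qed
  thus ?thesis by (simp add: poly_eq_poly_eq_iff)
qed

lemma order_lin: "order a [:- l, 1:] = (if a = l then 1 else (0::nat))"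
proof (cases "a = l")
  case True thus ?thesis using order_power_n_n[of a 1] by simp
next
  case False thus ?thesis by (simp add: order_0I)
qed

lemma prod_lin_nz: "(\<Prod>l\<leftarrow>xs. [:- l, 1::real:]) \<noteq> 0"
  by (auto simp: prod_list_zero_iff)

lemma order_prod_lin: "order a (\<Prod>l\<leftarrow>xs. [:- l, 1::real:]) = count (mset xs) a"
proof (induction xs)
  case Nil thus ?case by simp
next
  case (Cons x xs)
  have e: "(\<Prod>l\<leftarrow>x#xs. [:- l, 1::real:]) = [:- x, 1:] * (\<Prod>l\<leftarrow>xs. [:- l, 1::real:])"
    by (simp only: list.map prod_list.Cons)
  have "[:- x, 1:] * (\<Prod>l\<leftarrow>xs. [:- l, 1::real:]) \<noteq> 0" using prod_lin_nz[of "x#xs"] e by simp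
  from order_mult[OF this, of a] show ?case unfolding e using Cons by (simp add: order_lin)
qed


lemma sorted_eigs_eq:
  fixes X :: "real^'n^'n" and \<mu> :: "'n \<Rightarrow> real"
  assumes "charpoly X = (\<Prod>i\<in>UNIV. [:- \<mu> i, 1:])"
  shows "sorted_eigs X = sorted_list_of_multiset (image_mset \<mu> (mset_set UNIV))"
    and "length (sorted_eigs X) = CARD('n)"
proof -
  define ls where "ls = sorted_list_of_multiset (image_mset \<mu> (mset_set (UNIV::'n set)))"
  have mls: "mset ls = image_mset \<mu> (mset_set UNIV)" unfolding ls_def by simp
  have sl: "sorted ls" unfolding ls_def by simp
  have "length ls = size (mset ls)" by (simp only: size_mset)
  also have "\<dots> = CARD('n)" by (simp only: mls size_image_mset size_mset_set)
  finally have len: "length ls = CARD('n)" .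
  have pr: "charpoly X = (\<Prod>l\<leftarrow>ls. [:- l, 1:])"
  proof -
    have "(\<Prod>l\<leftarrow>ls. [:- l, 1:]) = prod_mset (image_mset (\<lambda>l. [:- l, 1:]) (mset ls))"
      by (simp only: prod_mset_prod_list[symmetric] mset_map)
    also have "\<dots> = prod_mset (image_mset (\<lambda>i. [:- \<mu> i, 1:]) (mset_set UNIV))"
      by (simp only: mls multiset.map_comp o_def)
    also have "\<dots> = (\<Prod>i\<in>UNIV. [:- \<mu> i, 1:])" by (simp only: prod_unfold_prod_mset)
    finally show ?thesis using assms by simp
  qed
  have uniq: "ys = ls" if "sorted ys \<and> length ys = CARD('n) \<and> charpoly X = (\<Prod>l\<leftarrow>ys. [:- l, 1:])" for ys
  proof -
    have pe: "(\<Prod>l\<leftarrow>ys. [:- l, 1:]) = (\<Prod>l\<leftarrow>ls. [:- l, 1::real:])"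
      using that pr by metis
    have "count (mset ys) a = count (mset ls) a" for a
      by (metis order_prod_lin pe)
    hence "mset ys = mset ls" by (simp add: multiset_eqI)
    hence "sort ls = ys" using that properties_for_sort by blast
    thus ?thesis using sl by (simp add: sorted_sort_id)
  qed
  have P: "sorted ls \<and> length ls = CARD('n) \<and> charpoly X = (\<Prod>l\<leftarrow>ls. [:- l, 1:])"
    using sl len pr by blast
  have "sorted_eigs X = ls"
    unfolding sorted_eigs_def
    by (rule the_equality, rule P, rule uniq)
  thus "sorted_eigs X = sorted_list_of_multiset (image_mset \<mu> (mset_set UNIV))"
    and "length (sorted_eigs X) = CARD('n)" using len ls_def by auto
qed


lemma sorted_zeros:
  fixes xs :: "real list"
  assumes s: "sorted xs" and nn: "\<forall>x\<in>set xs. x \<ge> 0" and cnt: "count (mset xs) 0 = r"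
    and rl: "r < length xs"
  shows "xs ! r > 0" and "\<forall>x\<in>set xs. x = 0 \<or> xs ! r \<le> x"
proof -
  define Z where "Z = {i. i < length xs \<and> 0 = xs ! i}"
  have cz: "card Z = r"
    using cnt unfolding Z_def by (simp only: count_mset count_list_eq_length_filter length_filter_conv_card)
  have fZ: "finite Z" unfolding Z_def by simp
  show "xs ! r > 0"
  proof (rule ccontr)
    assume "\<not> xs ! r > 0"
    hence "xs ! r \<le> 0" by simp
    have "{..r} \<subseteq> Z"
    proof
      fix i assume "i \<in> {..r}"
      hence i: "i \<le> r" by simp
      have "xs ! i \<le> xs ! r" using sorted_nth_mono[OF s i rl] .
      moreover have "xs ! i \<ge> 0" using nn i rl by simp
      ultimately show "i \<in> Z" unfolding Z_def using i rl \<open>xs ! r \<le> 0\<close> by simp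
    qed
    from card_mono[OF fZ this] cz show False by simp
  qed
  show "\<forall>x\<in>set xs. x = 0 \<or> xs ! r \<le> x"
  proof (intro ballI)
    fix x assume x: "x \<in> set xs"
    show "x = 0 \<or> xs ! r \<le> x"
    proof (rule ccontr)
      assume "\<not> (x = 0 \<or> xs ! r \<le> x)"
      hence x0: "x \<noteq> 0" and xr: "x < xs ! r" by auto
      have xp: "x > 0" using nn x x0 by force
      obtain k where k: "k < length xs" "xs ! k = x" using x by (auto simp: in_set_conv_nth)
      have kr: "k < r"
      proof (rule ccontr)
        assume "\<not> k < r" hence "r \<le> k" by simp
        from sorted_nth_mono[OF s this k(1)] xr k(2) show False by simp
      qed
      have "Z \<subseteq> {..<k}"
      proof
        fix p assume "p \<in> Z"
        hence p: "p < length xs" "xs ! p = 0" unfolding Z_def by auto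
        show "p \<in> {..<k}"
        proof (rule ccontr)
          assume "p \<notin> {..<k}" hence "k \<le> p" by simp
          from sorted_nth_mono[OF s this p(1)] k(2) p(2) xp show False by simp
        qed
      qed
      from card_mono[OF _ this] cz kr show False by simp
    qed
  qed
qed

lemma sorted_last:
  fixes xs :: "real list"
  assumes "sorted xs" "x \<in> set xs"
  shows "x \<le> last xs"
proof -
  obtain k where k: "k < length xs" "xs ! k = x" using assms(2) by (auto simp: in_set_conv_nth)
  have ne: "xs \<noteq> []" using assms(2) by auto
  have "xs ! k \<le> xs ! (length xs - 1)" using k by (intro sorted_nth_mono[OF assms(1)]) auto
  thus ?thesis using k ne by (simp add: last_conv_nth)
qed

lemma dot_T: "((A::real^'n^'m) *v x) \<bullet> y = x \<bullet> (transpose A *v y)"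
  using dot_lmul_matrix[of x "transpose A" y] by simp

lemma spd_inj: assumes "spd H" shows "inj ((*v) H)"
proof (rule inj_onI)
  fix x y assume "H *v x = H *v y"
  hence "H *v (x - y) = 0" by (simp add: matrix_vector_mult_diff_distrib)
  hence "(x - y) \<bullet> (H *v (x - y)) = 0" by simp
  hence "x - y = 0" using spd_pos[OF assms, of "x - y"] by (cases "x - y = 0") auto
  thus "x = y" by simp
qed

lemma diag_quad: "x \<bullet> (diagm \<mu> *v x) = (\<Sum>i\<in>UNIV. \<mu> i * (x $ i)^2)"
proof -
  have "(diagm \<mu> *v x) $ i = \<mu> i * x $ i" for i
    by (simp add: diagm_def matrix_vector_mult_def if_distrib[where f="\<lambda>a. a * _"] cong: if_cong)
  thus ?thesis by (simp add: inner_vec_def power2_eq_square algebra_simps)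
qed

lemma diag_comp: "(diagm \<mu> *v x) $ i = \<mu> i * x $ i"
  by (simp add: diagm_def matrix_vector_mult_def if_distrib[where f="\<lambda>a. a * _"] cong: if_cong)

lemma rayleigh:
  fixes H M :: "real^'n^'n"
  assumes H: "spd H" and Ms: "transpose M = M" and Mpsd: "\<forall>v. v \<bullet> (M *v v) \<ge> 0"
    and ker: "dim {v. M *v v = 0} = r" and rn: "r < CARD('n)"
  shows "sorted_eigs (matrix_inv H ** M) ! r > 0"
    and "\<And>v. sorted_eigs (matrix_inv H ** M) ! r * (v \<bullet> (M *v v))
              \<le> (M *v v) \<bullet> (matrix_inv H *v (M *v v))"
    and "\<And>v. (M *v v) \<bullet> (matrix_inv H *v (M *v v))
              \<le> last (sorted_eigs (matrix_inv H ** M)) * (v \<bullet> (M *v v))"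
proof -
  define Hi where "Hi = matrix_inv H"
  obtain U :: "real^'n^'n" and \<mu> where THU: "transpose U ** H ** U = mat 1"
    and MU: "M ** U = H ** U ** diagm \<mu>"
    using spectral[OF H Ms] by blast
  define T where "T = transpose U"
  have Hinv: "invertible H" using spd_inj[OF H] by (rule inj_invertible)
  have HHi: "H ** Hi = mat 1" and HiH: "Hi ** H = mat 1"
    unfolding Hi_def using inv_props[OF Hinv] by auto
  have UTH: "U ** (T ** H) = mat 1"
    using matrix_left_right_inverse[of "T ** H" U] THU unfolding T_def by blast
  have THU': "T ** (H ** U) = mat 1" using THU unfolding T_def by (simp add: matrix_mul_assoc)
  have HiHv: "Hi *v (H *v y) = y" for y
  proof -
    have "Hi *v (H *v y) = (Hi ** H) *v y" by (simp add: matrix_vector_mul_assoc)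
    thus ?thesis using HiH by simp
  qed
  have THUv: "T *v (H *v (U *v y)) = y" for y
  proof -
    have "T *v (H *v (U *v y)) = (T ** (H ** U)) *v y" by (simp add: matrix_vector_mul_assoc)
    thus ?thesis using THU' by simp
  qed
  have cp: "charpoly (Hi ** M) = (\<Prod>i\<in>UNIV. [:- \<mu> i, 1:])"
    by (rule charpoly_sim[OF THU MU HHi])
  define ls where "ls = sorted_list_of_multiset (image_mset \<mu> (mset_set (UNIV::'n set)))"
  have se: "sorted_eigs (Hi ** M) = ls" and len: "length ls = CARD('n)"
    using sorted_eigs_eq[OF cp] unfolding ls_def by auto
  have mls: "mset ls = image_mset \<mu> (mset_set UNIV)" unfolding ls_def by simp
  have setls: "set ls = range \<mu>"
    unfolding set_mset_mset[symmetric] mls by simp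
  have sls: "sorted ls" unfolding ls_def by simp
  have MUx: "M *v (U *v x) = H *v (U *v (diagm \<mu> *v x))" for x
    by (simp add: matrix_vector_mul_assoc MU matrix_mul_assoc)
  have qU: "(U *v x) \<bullet> (M *v (U *v x)) = (\<Sum>i\<in>UNIV. \<mu> i * (x $ i)^2)" for x
  proof -
    have "(U *v x) \<bullet> (M *v (U *v x)) = x \<bullet> (T *v (H *v (U *v (diagm \<mu> *v x))))"
      unfolding MUx dot_T T_def ..
    also have "T *v (H *v (U *v (diagm \<mu> *v x))) = diagm \<mu> *v x"
      by (rule THUv)
    finally show ?thesis by (simp add: diag_quad)
  qed
  have sU: "(M *v (U *v x)) \<bullet> (Hi *v (M *v (U *v x))) = (\<Sum>i\<in>UNIV. (\<mu> i * x $ i)^2)" for x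
  proof -
    define d where "d = diagm \<mu> *v x"
    have "Hi *v (M *v (U *v x)) = U *v d"
      unfolding MUx d_def by (rule HiHv)
    hence "(M *v (U *v x)) \<bullet> (Hi *v (M *v (U *v x))) = (H *v (U *v d)) \<bullet> (U *v d)"
      unfolding MUx d_def by simp
    also have "\<dots> = d \<bullet> (T *v (H *v (U *v d)))" unfolding T_def 
      using dot_T[of U d "H *v (U *v d)"] by (simp add: inner_commute)
    also have "T *v (H *v (U *v d)) = d"
      by (rule THUv)
    finally show ?thesis by (simp add: inner_vec_def d_def diag_comp power2_eq_square)
  qed
  have vU: "v = U *v ((T ** H) *v v)" for v
    using UTH by (simp add: matrix_vector_mul_assoc)
  have mu_nn: "\<mu> i \<ge> 0" for i
  proof -
    have "(\<Sum>j\<in>UNIV. \<mu> j * (axis i (1::real) $ j)^2) = \<mu> i"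
      by (simp add: axis_def if_distrib[where f="\<lambda>a. _ * a^2"] cong: if_cong)
    thus ?thesis using Mpsd qU[of "axis i 1"] by (metis)
  qed
  define N where "N = {x::real^'n. \<forall>i. i \<notin> {i. \<mu> i = 0} \<longrightarrow> x $ i = 0}"
  have kerU: "{v. M *v v = 0} = (*v) U ` N"
  proof (intro equalityI subsetI)
    fix v assume "v \<in> {v. M *v v = 0}"
    hence Mv: "M *v v = 0" by simp
    define c where "c = (T ** H) *v v"
    have "H *v (U *v (diagm \<mu> *v c)) = 0" using Mv vU[of v] MUx[of c] unfolding c_def by simp
    hence "T *v (H *v (U *v (diagm \<mu> *v c))) = 0" by simp
    hence "diagm \<mu> *v c = 0" using THUv by simp
    hence "c \<in> N" unfolding N_def by (auto simp: vec_eq_iff diag_comp)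
    thus "v \<in> (*v) U ` N" using vU[of v] unfolding c_def by blast
  next
    fix v assume "v \<in> (*v) U ` N"
    then obtain x where x: "x \<in> N" "v = U *v x" by blast
    have "diagm \<mu> *v x = 0" using x(1) unfolding N_def by (auto simp: vec_eq_iff diag_comp)
    thus "v \<in> {v. M *v v = 0}" using x(2) MUx[of x] by simp
  qed
  have Uinj: "inj ((*v) U)"
  proof (rule injI)
    fix x y assume "U *v x = U *v y"
    hence "T *v (H *v (U *v x)) = T *v (H *v (U *v y))" by simp
    thus "x = y" by (simp only: THUv)
  qed
  have "dim ((*v) U ` N) = dim N"
    by (rule dim_image_eq) (auto intro: matrix_vector_mul_linear inj_on_subset[OF Uinj])
  also have "dim N = card {i. \<mu> i = 0}"
    unfolding N_def dim_vec_eq[symmetric] by (rule dim_substandard_cart)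
  finally have cz: "card {i. \<mu> i = 0} = r" using ker kerU by simp
  have cnt: "count (mset ls) 0 = r"
    unfolding mls using cz by (simp add: count_image_mset_eq_card_vimage)
  have nn: "\<forall>x\<in>set ls. x \<ge> 0" using setls mu_nn by auto
  have pos: "ls ! r > 0" and gap: "\<forall>x\<in>set ls. x = 0 \<or> ls ! r \<le> x"
    using sorted_zeros[OF sls nn cnt] len rn by auto
  have gap': "\<mu> i = 0 \<or> ls ! r \<le> \<mu> i" for i using gap setls by auto
  have top: "\<mu> i \<le> last ls" for i using sorted_last[OF sls, of "\<mu> i"] setls by auto
  show "sorted_eigs (matrix_inv H ** M) ! r > 0" using pos se Hi_def by simp
  show "sorted_eigs (matrix_inv H ** M) ! r * (v \<bullet> (M *v v))
              \<le> (M *v v) \<bullet> (matrix_inv H *v (M *v v))" for v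
  proof -
    define c where "c = (T ** H) *v v"
    have "ls ! r * (v \<bullet> (M *v v)) = (\<Sum>i\<in>UNIV. ls ! r * (\<mu> i * (c $ i)^2))"
      using qU[of c] vU[of v] unfolding c_def by (simp add: sum_distrib_left)
    also have "\<dots> \<le> (\<Sum>i\<in>UNIV. (\<mu> i * c $ i)^2)"
    proof (rule sum_mono)
      fix i
      show "ls ! r * (\<mu> i * (c $ i)^2) \<le> (\<mu> i * c $ i)^2"
      proof (cases "\<mu> i = 0")
        case True thus ?thesis by simp
      next
        case False
        hence "ls ! r \<le> \<mu> i" using gap' by auto
        hence "ls ! r * \<mu> i \<le> \<mu> i * \<mu> i" using mu_nn[of i] by (simp add: mult_right_mono)
        hence "(ls ! r * \<mu> i) * (c $ i)^2 \<le> (\<mu> i * \<mu> i) * (c $ i)^2"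
          by (simp add: mult_right_mono)
        thus ?thesis by (simp add: power2_eq_square algebra_simps)
      qed
    qed
    also have "\<dots> = (M *v v) \<bullet> (matrix_inv H *v (M *v v))"
      using sU[of c] vU[of v] unfolding c_def Hi_def by simp
    finally show ?thesis using se Hi_def by simp
  qed
  show "(M *v v) \<bullet> (matrix_inv H *v (M *v v))
              \<le> last (sorted_eigs (matrix_inv H ** M)) * (v \<bullet> (M *v v))" for v
  proof -
    define c where "c = (T ** H) *v v"
    have "(M *v v) \<bullet> (matrix_inv H *v (M *v v)) = (\<Sum>i\<in>UNIV. (\<mu> i * c $ i)^2)"
      using sU[of c] vU[of v] unfolding c_def Hi_def by simp
    also have "\<dots> \<le> (\<Sum>i\<in>UNIV. last ls * (\<mu> i * (c $ i)^2))"
    proof (rule sum_mono)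
      fix i
      have "\<mu> i * \<mu> i \<le> last ls * \<mu> i" using top[of i] mu_nn[of i] by (simp add: mult_right_mono)
      hence "(\<mu> i * \<mu> i) * (c $ i)^2 \<le> (last ls * \<mu> i) * (c $ i)^2"
        by (simp add: mult_right_mono)
      thus "(\<mu> i * c $ i)^2 \<le> last ls * (\<mu> i * (c $ i)^2)"
        by (simp add: power2_eq_square algebra_simps)
    qed
    also have "\<dots> = last ls * (v \<bullet> (M *v v))"
      using qU[of c] vU[of v] unfolding c_def by (simp add: sum_distrib_left)
    finally show ?thesis using se Hi_def by simp
  qed
qed

lemma inj_of_ker:
  fixes A :: "real^'n^'m"
  assumes "\<And>c. A *v c = 0 \<Longrightarrow> c = 0"
  shows "inj ((*v) A)"
proof (rule injI)
  fix x y assume "A *v x = A *v y"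
  hence "A *v (x - y) = 0" by (simp add: matrix_vector_mult_diff_distrib)
  thus "x = y" using assms by fastforce
qed

lemma mv_diff: "((A::real^'n^'m) - B) *v v = A *v v - B *v v"
  by (simp add: matrix_vector_mult_def vec_eq_iff sum_subtractf algebra_simps)

lemma spd_psd: "spd A \<Longrightarrow> v \<bullet> (A *v v) \<ge> 0"
  using spd_pos[of A v] by (cases "v = 0") auto

theorem corollary1:
  fixes A H :: "real^'n^'n" and Z :: "real^'r^'n" and b xt :: "real^'n"
  assumes "spd A" and "spd H"
    and "CARD('r) < CARD('n)"
    and "rank Z = CARD('r)"
    and "P = mat 1 - A ** Z ** matrix_inv (transpose Z ** A ** Z) ** transpose Z"
    and "P *v b \<noteq> 0"
    and "x = matrix_inv A *v b"
    and "xj = transpose P *v xt + (Z ** matrix_inv (transpose Z ** A ** Z) ** transpose Z) *v b"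
    and "rj = b - A *v xj"
  shows "bnorm (P ** A) (x - xj) / bnorm (P ** A) x
         \<le> sqrt (kappa_eff CARD('r) (matrix_inv H ** P ** A))
            * (bnorm (matrix_inv H) rj / bnorm (matrix_inv H) (P *v b))"
proof -
  note A = assms(1) and H = assms(2)
  have As: "transpose A = A" using A by (rule spd_sym)
  define G where "G = transpose Z ** A ** Z"
  define Gi where "Gi = matrix_inv G"
  define C where "C = Z ** Gi ** transpose Z"
  define M where "M = P ** A"
  have Pdef: "P = mat 1 - A ** C" using assms(5) unfolding C_def Gi_def G_def
    by (simp add: matrix_mul_assoc)
  have Zinj: "inj ((*v) Z)" using assms(4) full_rank_injective by blast
  have Gq: "c \<bullet> (G *v c) = (Z *v c) \<bullet> (A *v (Z *v c))" for c
    unfolding G_def using dot_T[of Z c "A *v (Z *v c)"]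
    by (simp add: matrix_vector_mul_assoc matrix_mul_assoc)
  have "inj ((*v) G)"
  proof (rule inj_of_ker)
    fix c assume "G *v c = 0"
    hence "(Z *v c) \<bullet> (A *v (Z *v c)) = 0" using Gq[of c] by simp
    hence "Z *v c = 0" using spd_pos[OF A, of "Z *v c"] by (cases "Z *v c = 0") auto
    thus "c = 0" using Zinj by (metis injD matrix_vector_mult_0_right)
  qed
  hence Ginv: "invertible G" by (rule inj_invertible)
  have GGi: "G ** Gi = mat 1" and GiG: "Gi ** G = mat 1"
    unfolding Gi_def using inv_props[OF Ginv] by auto
  have Gs: "transpose G = G" unfolding G_def using As
    by (simp add: matrix_transpose_mul matrix_mul_assoc)
  have Gis: "transpose Gi = Gi"
  proof -
    have "transpose Gi ** G = mat 1"
      using arg_cong[OF GGi, of transpose] by (simp add: matrix_transpose_mul Gs)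
    hence "transpose Gi = transpose Gi ** (G ** Gi)" using GGi by simp
    also have "\<dots> = (transpose Gi ** G) ** Gi" by (simp add: matrix_mul_assoc)
    also have "\<dots> = Gi" using \<open>transpose Gi ** G = mat 1\<close> by simp
    finally show ?thesis .
  qed
  have GiGX: "X ** Gi ** transpose Z ** A ** Z = X" for X :: "real^'r^'k"
  proof -
    have "X ** Gi ** transpose Z ** A ** Z = X ** (Gi ** G)"
      unfolding G_def by (simp add: matrix_mul_assoc)
    thus ?thesis using GiG by simp
  qed
  have Cs: "transpose C = C" unfolding C_def
    by (simp add: matrix_transpose_mul Gis matrix_mul_assoc)
  have CAC: "X ** C ** A ** C = X ** C" for X :: "real^'n^'k"
    unfolding C_def by (simp add: matrix_mul_assoc GiGX)
  have ACAZ: "A ** C ** A ** Z = A ** Z"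
    unfolding C_def by (simp add: matrix_mul_assoc GiGX)
  have PT: "transpose P = mat 1 - C ** A"
    unfolding Pdef by (simp add: transpose_diff matrix_transpose_mul As Cs)
  have Mdef: "M = A - A ** C ** A"
    unfolding M_def Pdef by (simp add: mm_diff_right matrix_mul_assoc)
  have Ms: "transpose M = M"
    unfolding Mdef by (simp add: transpose_diff matrix_transpose_mul As Cs matrix_mul_assoc)
  have MPT: "M ** transpose P = M"
    unfolding PT Mdef by (simp add: mm_diff_left mm_diff_right matrix_mul_assoc CAC)
  have Mform: "M = P ** (A ** transpose P)"
    using MPT unfolding M_def by (simp add: matrix_mul_assoc)
  have Mpsd: "\<forall>v. v \<bullet> (M *v v) \<ge> 0"
  proof
    fix v
    have "v \<bullet> (M *v v) = (transpose P *v v) \<bullet> (A *v (transpose P *v v))"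
      unfolding Mform using dot_T[of "transpose P" v] 
      by (simp add: matrix_vector_mul_assoc[symmetric] dot_T)
    thus "v \<bullet> (M *v v) \<ge> 0" using spd_psd[OF A] by simp
  qed
  have MZ: "M ** Z = 0"
    unfolding Mdef by (simp add: mm_diff_right ACAZ)
  have Ainj: "inj ((*v) A)" using spd_inj[OF A] .
  have kerM: "{v. M *v v = 0} = range ((*v) Z)"
  proof (intro equalityI subsetI)
    fix v assume "v \<in> {v. M *v v = 0}"
    hence "A *v v - (A ** C ** A) *v v = 0"
      unfolding Mdef by (simp only: mv_diff mem_Collect_eq)
    moreover have "(A ** C ** A) *v v = A *v (C *v (A *v v))"
      by (simp add: matrix_vector_mul_assoc matrix_mul_assoc)
    ultimately have "A *v v = A *v (C *v (A *v v))" by (simp only: right_minus_eq)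
    hence "v = C *v (A *v v)" by (rule injD[OF Ainj])
    also have "\<dots> = Z *v ((Gi ** transpose Z ** A) *v v)"
      unfolding C_def by (simp add: matrix_vector_mul_assoc matrix_mul_assoc)
    finally show "v \<in> range ((*v) Z)" by blast
  next
    fix v assume "v \<in> range ((*v) Z)"
    then obtain c where "v = Z *v c" by blast
    hence "M *v v = (M ** Z) *v c" by (simp add: matrix_vector_mul_assoc)
    thus "v \<in> {v. M *v v = 0}" using MZ by simp
  qed
  have kdim: "dim {v. M *v v = 0} = CARD('r)"
    unfolding kerM using rank_dim_range[of Z] assms(4) by simp
  note R = rayleigh[OF H Ms Mpsd kdim assms(3)]
  define lmin where "lmin = sorted_eigs (matrix_inv H ** M) ! CARD('r)"
  define lmax where "lmax = last (sorted_eigs (matrix_inv H ** M))"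
  define Hi where "Hi = matrix_inv H"
  have lminp: "lmin > 0" using R(1) unfolding lmin_def .
  have low: "lmin * (v \<bullet> (M *v v)) \<le> (M *v v) \<bullet> (Hi *v (M *v v))" for v
    using R(2) unfolding lmin_def Hi_def .
  have up: "(M *v v) \<bullet> (Hi *v (M *v v)) \<le> lmax * (v \<bullet> (M *v v))" for v
    using R(3) unfolding lmax_def Hi_def .
  have kap: "kappa_eff CARD('r) (matrix_inv H ** P ** A) = lmax / lmin"
    unfolding kappa_eff_def lmax_def lmin_def M_def by (simp add: matrix_mul_assoc)
  define Ai where "Ai = matrix_inv A"
  have AAi: "A ** Ai = mat 1"
    unfolding Ai_def using inv_props[OF inj_invertible[OF Ainj]] by auto
  have Mx: "M *v x = P *v b"
  proof -
    have "(P ** A) *v (Ai *v b) = P *v ((A ** Ai) *v b)"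
      by (simp add: matrix_vector_mul_assoc matrix_mul_assoc)
    thus ?thesis using AAi unfolding M_def assms(7) Ai_def by simp
  qed
  have xjC: "xj = transpose P *v xt + C *v b" using assms(8) unfolding C_def Gi_def G_def .
  have MC: "M ** C = 0" unfolding Mdef by (simp add: mm_diff_right CAC)
  have Mxj: "M *v xj = M *v xt"
  proof -
    have "M *v xj = (M ** transpose P) *v xt + (M ** C) *v b"
      unfolding xjC by (simp add: matrix_vector_right_distrib matrix_vector_mul_assoc del: transpose_matrix_vector)
    thus ?thesis using MPT MC by simp
  qed
  have APT: "A ** transpose P = M" unfolding PT Mdef by (simp add: mm_diff_left matrix_mul_assoc)
  have Pb: "P *v b = b - (A ** C) *v b" unfolding Pdef by (simp add: mv_diff)
  have rjM: "rj = P *v b - M *v xt"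
  proof -
    have "rj = b - (A ** transpose P) *v xt - (A ** C) *v b"
      unfolding assms(9) xjC by (simp add: matrix_vector_right_distrib matrix_vector_mul_assoc del: transpose_matrix_vector)
    thus ?thesis unfolding APT Pb by simp
  qed
  have Me: "M *v (x - xj) = rj"
    unfolding rjM by (simp add: matrix_vector_mult_diff_distrib Mx Mxj)
  define qe where "qe = (x - xj) \<bullet> (M *v (x - xj))"
  define qx where "qx = x \<bullet> (M *v x)"
  define se where "se = rj \<bullet> (Hi *v rj)"
  define sx where "sx = (P *v b) \<bullet> (Hi *v (P *v b))"
  have l1: "lmin * qe \<le> se" using low[of "x - xj"] unfolding qe_def se_def Me .
  have u1: "sx \<le> lmax * qx" using up[of x] unfolding qx_def sx_def Mx .
  have qe0: "qe \<ge> 0" using Mpsd unfolding qe_def by blast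
  have qx0: "qx \<ge> 0" using Mpsd unfolding qx_def by blast
  have HHi: "H ** Hi = mat 1"
    unfolding Hi_def using inv_props[OF inj_invertible[OF spd_inj[OF H]]] by auto
  have sxp: "sx > 0"
  proof -
    define w where "w = Hi *v (P *v b)"
    have Hw: "H *v w = P *v b" unfolding w_def
      by (simp only: matrix_vector_mul_assoc[of H Hi] HHi matrix_vector_mul_lid)
    have "w \<noteq> 0" using Hw assms(6) by auto
    hence "w \<bullet> (H *v w) > 0" by (rule spd_pos[OF H])
    moreover have "sx = (P *v b) \<bullet> w" unfolding sx_def w_def ..
    ultimately show ?thesis unfolding Hw[symmetric] by (simp add: inner_commute)
  qed
  have qxp: "qx > 0"
  proof (rule ccontr)
    assume "\<not> qx > 0" hence "qx = 0" using qx0 by simp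
    thus False using u1 sxp by simp
  qed
  have lmaxp: "lmax > 0"
  proof (rule ccontr)
    assume "\<not> lmax > 0" hence "lmax * qx \<le> 0" using qxp by (simp add: mult_nonpos_nonneg)
    thus False using u1 sxp by simp
  qed
  have se0: "se \<ge> 0" using l1 lminp qe0 by (meson order_trans mult_nonneg_nonneg less_imp_le)
  have key: "qe / qx \<le> (lmax / lmin) * (se / sx)"
  proof -
    have "qe * lmin * sx \<le> se * sx" using l1 sxp by (simp add: mult.commute mult_right_mono)
    also have "\<dots> \<le> se * (lmax * qx)" using u1 se0 by (simp add: mult_left_mono)
    finally have "qe * lmin * sx \<le> se * (lmax * qx)" .
    thus ?thesis using qxp lminp sxp by (simp add: field_simps)
  qed
  have "sqrt (qe / qx) \<le> sqrt ((lmax / lmin) * (se / sx))" using key by simp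
  hence "sqrt qe / sqrt qx \<le> sqrt (lmax / lmin) * (sqrt se / sqrt sx)"
    by (simp add: real_sqrt_mult real_sqrt_divide)
  moreover have "bnorm (P ** A) (x - xj) = sqrt qe" unfolding bnorm_def qe_def M_def ..
  moreover have "bnorm (P ** A) x = sqrt qx" unfolding bnorm_def qx_def M_def ..
  moreover have "bnorm (matrix_inv H) rj = sqrt se" unfolding bnorm_def se_def Hi_def ..
  moreover have "bnorm (matrix_inv H) (P *v b) = sqrt sx" unfolding bnorm_def sx_def Hi_def ..
  ultimately show ?thesis using kap by simp
qed

end
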